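(* For every integer $k\ge 0$ there is a wall on $k$ colors whose graph has clique size $k$.
   Context: An interval graph $G=(V,E)$ comes with an interval representation $v\mapsto I_v$ (intervals of $\mathbb{R}$, distinct $u,v$ adjacent iff $I_u\cap I_v\ne\emptyset$); graphs are finite. $N[v]$ is the closed neighborhood of $v$ and $f(U)$ the image of $U$. A wall is a pair $(G,f)$ where $G$ is an interval graph on vertex set $V$ with a given interval representation, $f\colon V\to\{1,2,\dots\}$ is a proper coloring of $G$, and $f(N[v])\supseteq\{1,\dots,f(v)\}$ for every $v\in V$. It is a wall on $t$ colors if $|f(V)|=t$; its clique size is the clique number of $G$. *)

theory Defs
  imports "HOL-Analysis.Analysis"
begin

definition interval_rep :: "'v set \<Rightarrow> ('v \<Rightarrow> real set) \<Rightarrow> bool" where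
  "interval_rep V I \<longleftrightarrow> finite V \<and> (\<forall>v\<in>V. is_interval (I v) \<and> I v \<noteq> {})"

definition iadj :: "('v \<Rightarrow> real set) \<Rightarrow> 'v \<Rightarrow> 'v \<Rightarrow> bool" where
  "iadj I u v \<longleftrightarrow> u \<noteq> v \<and> I u \<inter> I v \<noteq> {}"

definition closed_nbhd :: "'v set \<Rightarrow> ('v \<Rightarrow> real set) \<Rightarrow> 'v \<Rightarrow> 'v set" where
  "closed_nbhd V I v = {u \<in> V. u = v \<or> iadj I u v}"

definition proper_coloring :: "'v set \<Rightarrow> ('v \<Rightarrow> real set) \<Rightarrow> ('v \<Rightarrow> nat) \<Rightarrow> bool" where
  "proper_coloring V I f \<longleftrightarrow>
     (\<forall>v\<in>V. f v \<ge> 1) \<and> (\<forall>u\<in>V. \<forall>v\<in>V. iadj I u v \<longrightarrow> f u \<noteq> f v)"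

definition is_wall :: "'v set \<Rightarrow> ('v \<Rightarrow> real set) \<Rightarrow> ('v \<Rightarrow> nat) \<Rightarrow> bool" where
  "is_wall V I f \<longleftrightarrow> interval_rep V I \<and> proper_coloring V I f \<and>
     (\<forall>v\<in>V. {1..f v} \<subseteq> f ` closed_nbhd V I v)"

definition is_clique :: "'v set \<Rightarrow> ('v \<Rightarrow> real set) \<Rightarrow> 'v set \<Rightarrow> bool" where
  "is_clique V I C \<longleftrightarrow> C \<subseteq> V \<and> (\<forall>u\<in>C. \<forall>v\<in>C. u \<noteq> v \<longrightarrow> iadj I u v)"

definition clique_number :: "'v set \<Rightarrow> ('v \<Rightarrow> real set) \<Rightarrow> nat" where
  "clique_number V I = Max (card ` {C. is_clique V I C})"

end

theory Submission
  imports Defs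
begin

theorem mainTheorem4:
  fixes k :: nat
  shows "\<exists>(V :: nat set) (I :: nat \<Rightarrow> real set) (f :: nat \<Rightarrow> nat).
           is_wall V I f \<and> card (f ` V) = k \<and> clique_number V I = k"
proof (intro exI conjI)
  let ?V = "{1..k}" and ?I = "\<lambda>v::nat. {0::real}" and ?f = "\<lambda>v::nat. v"
  have adj: "iadj ?I u v \<longleftrightarrow> u \<noteq> v" for u v by (simp add: iadj_def)
  have nb: "v \<in> ?V \<Longrightarrow> closed_nbhd ?V ?I v = ?V" for v
    by (auto simp: closed_nbhd_def adj)
  show "is_wall ?V ?I ?f"
    unfolding is_wall_def interval_rep_def proper_coloring_def
    by (auto simp: adj closed_nbhd_def is_interval_1)
  show "card (?f ` ?V) = k" by simp
  have cl: "{C. is_clique ?V ?I C} = Pow ?V"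
    by (auto simp: is_clique_def adj)
  show "clique_number ?V ?I = k"
    unfolding clique_number_def cl
  proof (rule Max_eqI)
    show "finite (card ` Pow ?V)" by simp
    show "y \<le> k" if "y \<in> card ` Pow ?V" for y
      using that card_mono[of ?V] by fastforce
    show "k \<in> card ` Pow ?V" by (rule image_eqI[of _ _ ?V]) auto
  qed
qed

end
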